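(* Let $G$ be a finite group. If the difference graph $\mathcal{D}(G)$ is null (has no edges), then the power graph $\mathcal{P}(G)$ is a cograph, i.e. it contains no induced subgraph isomorphic to the path $P_4$ on four vertices.
   Context: For a finite group $G$ with identity $e$: the intersection power graph $\mathcal{G}_I(G)$ has vertex set $G$, two distinct non-identity vertices $x,y$ being adjacent iff $\langle x\rangle\cap\langle y\rangle\neq\{e\}$, and $e$ being adjacent to every other vertex. The power graph $\mathcal{P}(G)$ has vertex set $G$, two distinct vertices being adjacent iff one is a power of the other. The difference graph $\mathcal{D}(G)$ has edge set $E(\mathcal{G}_I(G))\setminus E(\mathcal{P}(G))$ with isolated vertices removed. *)

theory Defs
  imports "HOL-Algebra.Algebra"
begin

definition power_adj :: "('a, 'b) monoid_scheme \<Rightarrow> 'a \<Rightarrow> 'a \<Rightarrow> bool" where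
  "power_adj G x y \<longleftrightarrow> x \<in> carrier G \<and> y \<in> carrier G \<and> x \<noteq> y \<and>
     ((\<exists>k::int. y = x [^]\<^bsub>G\<^esub> k) \<or> (\<exists>k::int. x = y [^]\<^bsub>G\<^esub> k))"

definition inter_power_adj :: "('a, 'b) monoid_scheme \<Rightarrow> 'a \<Rightarrow> 'a \<Rightarrow> bool" where
  "inter_power_adj G x y \<longleftrightarrow> x \<in> carrier G \<and> y \<in> carrier G \<and> x \<noteq> y \<and>
     (x = \<one>\<^bsub>G\<^esub> \<or> y = \<one>\<^bsub>G\<^esub> \<or>
      generate G {x} \<inter> generate G {y} \<noteq> {\<one>\<^bsub>G\<^esub>})"

text \<open>The difference graph is null: its edge set E(G_I) minus E(P) is empty
  (removing isolated vertices does not affect the edge set).\<close>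
definition difference_graph_null :: "('a, 'b) monoid_scheme \<Rightarrow> bool" where
  "difference_graph_null G \<longleftrightarrow>
     {{x, y} | x y. inter_power_adj G x y} - {{x, y} | x y. power_adj G x y} = {}"

definition cograph :: "'a set \<Rightarrow> ('a \<Rightarrow> 'a \<Rightarrow> bool) \<Rightarrow> bool" where
  "cograph V E \<longleftrightarrow> \<not> (\<exists>a\<in>V. \<exists>b\<in>V. \<exists>c\<in>V. \<exists>d\<in>V.
      distinct [a, b, c, d] \<and> E a b \<and> E b c \<and> E c d \<and>
      \<not> E a c \<and> \<not> E a d \<and> \<not> E b d)"

end

theory Submission
  imports Defs
begin

definition ispow :: "('a, 'b) monoid_scheme \<Rightarrow> 'a \<Rightarrow> 'a \<Rightarrow> bool" where
  "ispow G x y \<longleftrightarrow> (\<exists>k::int. y = x [^]\<^bsub>G\<^esub> k)"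

lemma ispow_trans:
  assumes "group G" "x \<in> carrier G" "ispow G x y" "ispow G y z"
  shows "ispow G x z"
proof -
  obtain k where k: "y = x [^]\<^bsub>G\<^esub> (k::int)" using assms(3) unfolding ispow_def by blast
  obtain j where j: "z = y [^]\<^bsub>G\<^esub> (j::int)" using assms(4) unfolding ispow_def by blast
  have "z = x [^]\<^bsub>G\<^esub> (k * j)" using j k group.int_pow_pow[OF assms(1) assms(2)] by simp
  then show ?thesis unfolding ispow_def by blast
qed

lemma ispow_gen:
  assumes "group G" "x \<in> carrier G" "ispow G x y"
  shows "y \<in> generate G {x}"
  using assms group.generate_pow[OF assms(1) assms(2)] unfolding ispow_def by blast

lemma nonadj:
  assumes G: "group G" and N: "difference_graph_null G"
    and x: "x \<in> carrier G" and y: "y \<in> carrier G" and ne: "x \<noteq> y"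
    and na: "\<not> power_adj G x y"
  shows "x \<noteq> \<one>\<^bsub>G\<^esub> \<and> y \<noteq> \<one>\<^bsub>G\<^esub> \<and>
     (\<forall>z. ispow G x z \<and> ispow G y z \<longrightarrow> z = \<one>\<^bsub>G\<^esub>)"
proof -
  have ni: "\<not> inter_power_adj G x y"
  proof
    assume h: "inter_power_adj G x y"
    then have "{x, y} \<in> {{x, y} | x y. inter_power_adj G x y}" by blast
    with N have "{x, y} \<in> {{x, y} | x y. power_adj G x y}"
      unfolding difference_graph_null_def by blast
    then obtain u v where uv: "{x, y} = {u, v}" "power_adj G u v" by blast
    then have "(u = x \<and> v = y) \<or> (u = y \<and> v = x)" by (metis doubleton_eq_iff)
    then have "power_adj G x y \<or> power_adj G y x" using uv(2) by blast
    then have "power_adj G x y" unfolding power_adj_def by blast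
    with na show False by blast
  qed
  then have h: "x \<noteq> \<one>\<^bsub>G\<^esub>" "y \<noteq> \<one>\<^bsub>G\<^esub>"
    "generate G {x} \<inter> generate G {y} = {\<one>\<^bsub>G\<^esub>}"
    using x y ne unfolding inter_power_adj_def by auto
  show ?thesis using h ispow_gen[OF G x] ispow_gen[OF G y] by blast
qed

lemma padj_ispow:
  "power_adj G x y \<Longrightarrow> ispow G x y \<or> ispow G y x"
  unfolding power_adj_def ispow_def by blast

lemma ispow_refl:
  assumes "group G" "x \<in> carrier G" shows "ispow G x x"
  unfolding ispow_def by (rule exI[of _ 1]) (use assms in \<open>simp add: group.int_pow_1\<close>)

theorem proposition2p5:
  fixes G :: "('a, 'b) monoid_scheme"
  assumes "group G" and "finite (carrier G)"
    and "difference_graph_null G"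
  shows "cograph (carrier G) (power_adj G)"
  unfolding cograph_def
proof clarify
  fix a b c d
  assume V: "a \<in> carrier G" "b \<in> carrier G" "c \<in> carrier G" "d \<in> carrier G"
    and D: "distinct [a, b, c, d]"
    and E: "power_adj G a b" "power_adj G b c" "power_adj G c d"
    and NE: "\<not> power_adj G a c" "\<not> power_adj G a d" "\<not> power_adj G b d"
  have ac: "a \<noteq> \<one>\<^bsub>G\<^esub> \<and> c \<noteq> \<one>\<^bsub>G\<^esub> \<and>
     (\<forall>z. ispow G a z \<and> ispow G c z \<longrightarrow> z = \<one>\<^bsub>G\<^esub>)"
    using nonadj[OF assms(1,3) V(1) V(3) _ NE(1)] D by simp
  have bd: "b \<noteq> \<one>\<^bsub>G\<^esub> \<and> d \<noteq> \<one>\<^bsub>G\<^esub> \<and>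
     (\<forall>z. ispow G b z \<and> ispow G d z \<longrightarrow> z = \<one>\<^bsub>G\<^esub>)"
    using nonadj[OF assms(1,3) V(2) V(4) _ NE(3)] D by simp
  note T = ispow_trans[OF assms(1)]
  have ra: "ispow G a a" "ispow G b b" "ispow G c c" "ispow G d d"
    using ispow_refl[OF assms(1)] V by auto
  have ab: "ispow G b a"
  proof (rule ccontr)
    assume "\<not> ispow G b a"
    then have ab: "ispow G a b" using padj_ispow[OF E(1)] by blast
    have "ispow G b c \<or> ispow G c b" using padj_ispow[OF E(2)] .
    then show False
    proof
      assume "ispow G b c"
      then have "ispow G a c" using T[OF V(1) ab] by blast
      then show False using ac ra by blast
    qed (use ab ac bd in blast)
  qed
  have dc: "ispow G c d"
  proof (rule ccontr)
    assume "\<not> ispow G c d"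
    then have dc: "ispow G d c" using padj_ispow[OF E(3)] by blast
    have "ispow G b c \<or> ispow G c b" using padj_ispow[OF E(2)] .
    then show False
    proof
      assume "ispow G c b"
      then have "ispow G d b" using T[OF V(4) dc] by blast
      then show False using bd ra by blast
    qed (use dc ac bd in blast)
  qed
  have "ispow G b c \<or> ispow G c b" using padj_ispow[OF E(2)] .
  then show False
  proof
    assume "ispow G c b"
    then have "ispow G c a" using T[OF V(3) _ ab] by blast
    then show False using ac ra by blast
  next
    assume "ispow G b c"
    then have "ispow G b d" using T[OF V(2) _ dc] by blast
    then show False using bd ra by blast
  qed
qed

end
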